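(* Let $K$ be the transition kernel of a Markov chain on a general state space, reversible with respect to $\pi$. Let $\epsilon>0$ and $\mu_0\ll\pi$ with $\chi(\mu_0\|\pi)<\infty$, and $h_0=d\mu_0/d\pi$. If $\mathcal E_K(h_0,h_0)/\chi(\mu_0\|\pi)^2\le1/2$, then $$\tau_2(\epsilon,\mu_0)\ge2\Big(-\log\Big(1-\frac{2\mathcal E_K(h_0,h_0)}{\chi(\mu_0\|\pi)^2}\Big)\Big)^{-1}\log\frac{\chi(\mu_0\|\pi)}{\epsilon}.$$ Consequently, if $\mathcal E_K(h_0,h_0)/\chi(\mu_0\|\pi)^2\le1/4$, then $$\tau_2(\epsilon,\mu_0)\ge\frac12\Big(\frac{\mathcal E_K(h_0,h_0)}{\chi(\mu_0\|\pi)^2}\Big)^{-1}\log\frac{\chi(\mu_0\|\pi)}{\epsilon}.$$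
   Context: Reversibility: $K(x,dy)\pi(dx)=K(y,dx)\pi(dy)$. $\mu_n$ is the law after $n$ steps from $\mu_0$. For $\mu\ll\pi$, $\chi(\mu\|\pi)=\big(\int(\frac{d\mu}{d\pi}-1)^2d\pi\big)^{1/2}$. Dirichlet form: $\mathcal E_K(g,g)=\frac12\iint(g(x)-g(y))^2K(x,dy)\pi(dx)$ for $g\in L_2(\pi)$. The $\chi^2$ mixing time is $\tau_2(\epsilon,\mu_0)=\inf\{n\in\mathbb N:\chi(\mu_n\|\pi)\le\epsilon\}$. *)

theory Defs
  imports "HOL-Probability.Probability"
begin

definition chain_step :: "('a \<Rightarrow> 'a measure) \<Rightarrow> 'a measure \<Rightarrow> 'a measure" where
  "chain_step K \<mu> = \<mu> \<bind> K"

definition law_after :: "('a \<Rightarrow> 'a measure) \<Rightarrow> nat \<Rightarrow> 'a measure \<Rightarrow> 'a measure" where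
  "law_after K n \<mu>0 = (chain_step K ^^ n) \<mu>0"

text \<open>Reversibility K(x,dy)\<pi>(dx) = K(y,dx)\<pi>(dy), i.e. equality on all measurable rectangles.\<close>
definition reversible :: "'a measure \<Rightarrow> ('a \<Rightarrow> 'a measure) \<Rightarrow> bool" where
  "reversible \<pi> K \<longleftrightarrow>
     (\<forall>A\<in>sets \<pi>. \<forall>B\<in>sets \<pi>.
        (\<integral>\<^sup>+x. indicator A x * emeasure (K x) B \<partial>\<pi>) =
        (\<integral>\<^sup>+y. indicator B y * emeasure (K y) A \<partial>\<pi>))"

definition density_wrt :: "'a measure \<Rightarrow> 'a measure \<Rightarrow> 'a \<Rightarrow> real" where
  "density_wrt \<pi> \<mu> x = enn2real (RN_deriv \<pi> \<mu> x)"

definition chi :: "'a measure \<Rightarrow> 'a measure \<Rightarrow> ennreal" where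
  "chi \<pi> \<mu> =
     (if sets \<mu> = sets \<pi> \<and> absolutely_continuous \<pi> \<mu> then
        (let I = (\<integral>\<^sup>+x. ennreal ((density_wrt \<pi> \<mu> x - 1)\<^sup>2) \<partial>\<pi>)
         in if I = \<infinity> then \<infinity> else ennreal (sqrt (enn2real I)))
      else \<infinity>)"

definition dirichlet_form :: "'a measure \<Rightarrow> ('a \<Rightarrow> 'a measure) \<Rightarrow> ('a \<Rightarrow> real) \<Rightarrow> real" where
  "dirichlet_form \<pi> K g =
     enn2real ((1/2) * (\<integral>\<^sup>+x. (\<integral>\<^sup>+y. ennreal ((g x - g y)\<^sup>2) \<partial>K x) \<partial>\<pi>))"

text \<open>chi^2 mixing time; the infimum of the empty set is \<infinity> (top of enat).\<close>
definition mixing_time_chi :: "'a measure \<Rightarrow> ('a \<Rightarrow> 'a measure) \<Rightarrow> real \<Rightarrow> 'a measure \<Rightarrow> enat" where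
  "mixing_time_chi \<pi> K \<epsilon> \<mu>0 = Inf {enat n | n. chi \<pi> (law_after K n \<mu>0) \<le> ennreal \<epsilon>}"

end

theory Submission
  imports Defs
begin


lemma ennreal_le_1_sq: "(x::ennreal) \<le> 1 + x^2"
proof (cases "x \<le> 1")
  case True then show ?thesis using order_trans[OF True add_increasing2[of "x^2" 1 1]] by simp
next
  case False
  then have "x \<le> x * x" using mult_left_mono[of 1 x x] False by simp
  also have "\<dots> \<le> 1 + x^2" by (simp add: power2_eq_square)
  finally show ?thesis .
qed

lemma ennreal_amgm: "2 * (c::ennreal) * x \<le> c^2 + x^2"
proof (cases "c = top \<or> x = top")
  case True then show ?thesis by (auto simp: power2_eq_square ennreal_mult_top ennreal_top_mult)
next
  case False
  then obtain a b where ab: "c = ennreal a" "x = ennreal b" "a \<ge> 0" "b \<ge> 0"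
    by (cases c; cases x) auto
  have "2 * a * b \<le> a^2 + b^2" by (rule sum_squares_bound)
  moreover have "2 * c * x = ennreal (2*a*b)" using ab by (simp add: ennreal_mult)
  moreover have "c^2 + x^2 = ennreal (a^2 + b^2)" using ab by (simp add: ennreal_power ennreal_plus del: ennreal_plus[symmetric])
  ultimately show ?thesis by (metis ennreal_leI)
qed

lemma nn_jensen_sq:
  assumes M: "prob_space M" and g: "g \<in> borel_measurable M"
  shows "(\<integral>\<^sup>+x. g x \<partial>M)^2 \<le> (\<integral>\<^sup>+x. (g x)^2 \<partial>M)"
proof (cases "(\<integral>\<^sup>+x. g x \<partial>M) = top")
  case True
  have "(\<integral>\<^sup>+x. g x \<partial>M) \<le> (\<integral>\<^sup>+x. 1 + (g x)^2 \<partial>M)"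
    by (intro nn_integral_mono ennreal_le_1_sq)
  also have "\<dots> = (\<integral>\<^sup>+x. 1 \<partial>M) + (\<integral>\<^sup>+x. (g x)^2 \<partial>M)"
    using g by (intro nn_integral_add) auto
  also have "\<dots> = 1 + (\<integral>\<^sup>+x. (g x)^2 \<partial>M)"
    using M by (simp add: prob_space.emeasure_space_1)
  finally have "1 + (\<integral>\<^sup>+x. (g x)^2 \<partial>M) = top" using True by (simp add: top_unique)
  then have "(\<integral>\<^sup>+x. (g x)^2 \<partial>M) = top" by simp
  then show ?thesis by simp
next
  case False
  define c where "c = (\<integral>\<^sup>+x. g x \<partial>M)"
  have "2 * c * c = (\<integral>\<^sup>+x. 2 * c * g x \<partial>M)"
    using g unfolding c_def by (simp add: nn_integral_cmult)
  also have "\<dots> \<le> (\<integral>\<^sup>+x. c^2 + (g x)^2 \<partial>M)"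
    by (intro nn_integral_mono ennreal_amgm)
  also have "\<dots> = (\<integral>\<^sup>+x. c^2 \<partial>M) + (\<integral>\<^sup>+x. (g x)^2 \<partial>M)"
    using g by (intro nn_integral_add) auto
  also have "\<dots> = c^2 + (\<integral>\<^sup>+x. (g x)^2 \<partial>M)"
    using M by (simp add: prob_space.emeasure_space_1)
  finally have "c^2 + c^2 \<le> c^2 + (\<integral>\<^sup>+x. (g x)^2 \<partial>M)"
    by (simp add: power2_eq_square mult_2 distrib_right)
  moreover have "c^2 \<noteq> top" using False unfolding c_def by (simp add: power2_eq_square ennreal_mult_eq_top_iff)
  ultimately show ?thesis unfolding c_def
    using ennreal_add_left_cancel_le[of "c^2"] by simp
qed

lemma nn_add4:
  assumes [measurable]: "f1 \<in> borel_measurable M" "f2 \<in> borel_measurable M" "f3 \<in> borel_measurable M" "f4 \<in> borel_measurable M"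
  shows "(\<integral>\<^sup>+x. f1 x + f2 x + f3 x + f4 x \<partial>M) = (\<integral>\<^sup>+x. f1 x \<partial>M) + (\<integral>\<^sup>+x. f2 x \<partial>M) + (\<integral>\<^sup>+x. f3 x \<partial>M) + (\<integral>\<^sup>+x. f4 x \<partial>M)"
  by (simp add: nn_integral_add)

lemma nn_cmult_real:
  assumes [measurable]: "g \<in> borel_measurable M" and "c \<ge> 0" "\<And>x. g x \<ge> 0"
  shows "(\<integral>\<^sup>+x. ennreal (c * g x) \<partial>M) = ennreal c * (\<integral>\<^sup>+x. ennreal (g x) \<partial>M)"
  using assms by (simp add: ennreal_mult nn_integral_cmult)

lemma pt_sq: "t \<ge> 0 \<Longrightarrow> ennreal ((t - 1)^2) + 2 * ennreal t = ennreal (t * t) + 1"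
proof -
  assume t: "t \<ge> 0"
  have "ennreal ((t - 1)^2) + 2 * ennreal t = ennreal ((t - 1)^2 + 2 * t)"
    using t by (simp add: ennreal_plus ennreal_mult)
  also have "(t - 1)^2 + 2 * t = t * t + 1" by (simp add: power2_eq_square algebra_simps)
  finally show ?thesis using t by (simp add: ennreal_plus)
qed

lemma pt_logconv:
  fixes x y s :: real
  assumes "x \<ge> 0" "y \<ge> 0" "s > 0"
  shows "ennreal (2 * (x * y)) + 2 \<le> ennreal (s * (x - 1)^2) + ennreal (1/s * (y - 1)^2) + 2 * ennreal x + 2 * ennreal y"
proof -
  have "0 \<le> (s * (x - 1) - (y - 1))^2 / s" using assms by simp
  also have "(s * (x - 1) - (y - 1))^2 / s = s * (x - 1)^2 + 1/s * (y - 1)^2 - 2 * (x - 1) * (y - 1)"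
    using assms by (simp add: power2_eq_square field_simps)
  finally have r: "2 * (x * y) + 2 \<le> s * (x - 1)^2 + 1/s * (y - 1)^2 + 2 * x + 2 * y"
    by (simp add: algebra_simps)
  have "ennreal (2 * (x * y)) + 2 = ennreal (2 * (x * y) + 2)"
    using assms by (simp add: ennreal_plus)
  also have "\<dots> \<le> ennreal (s * (x - 1)^2 + 1/s * (y - 1)^2 + 2 * x + 2 * y)"
    by (rule ennreal_leI[OF r])
  also have "\<dots> = ennreal (s * (x - 1)^2) + ennreal (1/s * (y - 1)^2) + 2 * ennreal x + 2 * ennreal y"
    using assms by (simp add: ennreal_plus ennreal_mult del: ennreal_plus[symmetric])
  finally show ?thesis .
qed

lemma pt_dir: "ennreal ((a - b)^2) + ennreal (2 * a * b) = ennreal (a^2) + ennreal ((b::real)^2)"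
  if "a \<ge> 0" "b \<ge> 0"
proof -
  have "ennreal ((a - b)^2) + ennreal (2 * a * b) = ennreal ((a - b)^2 + 2 * a * b)"
    using that by (simp add: ennreal_plus)
  also have "(a - b)^2 + 2 * a * b = a^2 + b^2" by (simp add: power2_eq_square algebra_simps)
  finally show ?thesis by (simp add: ennreal_plus)
qed

lemma real_from_enn:
  fixes a b c s :: real
  assumes "a \<ge> 0" "b \<ge> 0" "c \<ge> 0" "s > 0"
    and H: "2 * ennreal (b + 1) + 2 * 1 \<le> ennreal s * ennreal a + ennreal (1/s) * ennreal c + 2 * 1 + 2 * 1"
  shows "2 * b \<le> s * a + c / s"
proof -
  have l: "2 * ennreal (b + 1) + 2 * 1 = ennreal (2 * b + 4)"
  proof -
    have "ennreal (2 * b + 4) = ennreal (2 * (b + 1) + 2)" by (simp add: algebra_simps)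
    also have "\<dots> = ennreal (2 * (b + 1)) + ennreal 2" using \<open>b \<ge> 0\<close> by (intro ennreal_plus) auto
    also have "ennreal (2 * (b + 1)) = ennreal 2 * ennreal (b + 1)" using \<open>b \<ge> 0\<close> by (intro ennreal_mult) auto
    finally show ?thesis by simp
  qed
  have r: "ennreal s * ennreal a + ennreal (1/s) * ennreal c + 2 * 1 + 2 * 1 = ennreal (s * a + c / s + 4)"
  proof -
    have m1: "ennreal (s * a) = ennreal s * ennreal a" using assms by (intro ennreal_mult) auto
    have m2: "ennreal (1/s * c) = ennreal (1/s) * ennreal c" using assms by (intro ennreal_mult) auto
    have p1: "ennreal (s*a + 1/s*c + 2 + 2) = ennreal (s*a + 1/s*c + 2) + ennreal 2" by (rule ennreal_plus) (use assms in auto)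
    have p2: "ennreal (s*a + 1/s*c + 2) = ennreal (s*a + 1/s*c) + ennreal 2" by (rule ennreal_plus) (use assms in auto)
    have p3: "ennreal (s*a + 1/s*c) = ennreal (s*a) + ennreal (1/s*c)" by (rule ennreal_plus) (use assms in auto)
    have "ennreal s * ennreal a + ennreal (1/s) * ennreal c + 2 * 1 + 2 * 1 = ennreal (s*a) + ennreal(1/s*c) + ennreal 2 + ennreal 2"
      by (simp only: m1 m2 ennreal_numeral mult_1_right)
    also have "\<dots> = ennreal (s*a + 1/s*c + 2 + 2)" by (simp only: p1 p2 p3)
    also have "\<dots> = ennreal (s * a + c / s + 4)" by (rule arg_cong[where f=ennreal]) simp
    finally show ?thesis .
  qed
  have "ennreal (2 * b + 4) \<le> ennreal (s * a + c / s + 4)" using H unfolding l r .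
  then have "2 * b + 4 \<le> s * a + c / s + 4" using assms by (subst (asm) ennreal_le_iff) auto
  then show ?thesis by simp
qed

lemma logconv_sq:
  fixes x y z :: real
  assumes "x \<ge> 0" "y \<ge> 0" "z \<ge> 0" and lc: "\<And>s. s > 0 \<Longrightarrow> 2 * y \<le> s * x + z / s"
  shows "y^2 \<le> x * z"
proof (cases "y = 0")
  case True then show ?thesis using assms by simp
next
  case False
  then have y: "y > 0" using assms by simp
  show ?thesis
  proof (cases "x > 0")
    case True
    have "2 * y \<le> (y / x) * x + z / (y / x)" using lc[of "y/x"] y True by simp
    also have "\<dots> = y + z * x / y" using True y by (simp add: field_simps)
    finally have "y \<le> z * x / y" by simp
    then have "y * y \<le> z * x" using y by (simp add: field_simps)
    then show ?thesis by (simp add: power2_eq_square mult.commute)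
  next
    case False
    then have x0: "x = 0" using assms by simp
    show ?thesis
    proof (cases "z > 0")
      case True
      have "2 * y \<le> (z / y) * x + z / (z / y)" using lc[of "z/y"] y True by simp
      also have "\<dots> = y" using True y x0 by simp
      finally show ?thesis using y by simp
    next
      case False
      then have "z = 0" using assms by simp
      then show ?thesis using lc[of 1] x0 y by simp
    qed
  qed
qed

lemma real_decay:
  fixes a :: "nat \<Rightarrow> real" and c :: real
  assumes nn: "\<And>n. a n \<ge> 0"
    and lc: "\<And>n s. s > 0 \<Longrightarrow> 2 * a (Suc n) \<le> s * a n + a (Suc (Suc n)) / s"
    and a0: "a 0 > 0" and c: "c > 0" and base: "a 1 \<ge> c * a 0"
  shows "a m \<ge> c^m * a 0"
proof -
  have sq: "a (Suc n)^2 \<le> a n * a (Suc (Suc n))" for n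
    by (rule logconv_sq[OF nn nn nn lc])
  have P: "a (Suc n) \<ge> c * a n \<and> a n > 0" for n
  proof (induction n)
    case 0 then show ?case using base a0 by simp
  next
    case (Suc n)
    then have an: "a n > 0" and st: "a (Suc n) \<ge> c * a n" by auto
    have pos: "a (Suc n) > 0" using st an c by (smt (verit) mult_pos_pos)
    have "c * a n * a (Suc n) \<le> a (Suc n) * a (Suc n)"
      using st pos by (intro mult_right_mono) auto
    also have "\<dots> \<le> a n * a (Suc (Suc n))" using sq[of n] by (simp add: power2_eq_square)
    finally have "a n * (c * a (Suc n)) \<le> a n * a (Suc (Suc n))" by (simp add: ac_simps)
    then have "c * a (Suc n) \<le> a (Suc (Suc n))" using an by simp
    then show ?case using pos by simp
  qed
  show ?thesis
  proof (induction m)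
    case 0 then show ?case by simp
  next
    case (Suc m)
    have "c^(Suc m) * a 0 = c * (c^m * a 0)" by simp
    also have "\<dots> \<le> c * a m" using Suc c by simp
    also have "\<dots> \<le> a (Suc m)" using P[of m] by simp
    finally show ?case .
  qed
qed

lemma Inf_enat_Least:
  assumes "\<exists>n. P n"
  shows "Inf {enat n | n. P n} = enat (LEAST n. P n)"
proof (rule antisym)
  show "Inf {enat n | n. P n} \<le> enat (LEAST n. P n)"
    using assms by (intro Inf_lower) (auto intro: LeastI_ex)
  show "enat (LEAST n. P n) \<le> Inf {enat n | n. P n}"
    by (intro Inf_greatest) (auto intro: Least_le)
qed

lemma final_real:
  fixes a :: "nat \<Rightarrow> real" and E \<epsilon> :: real and m :: nat
  assumes nn: "\<And>n. a n \<ge> 0"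
    and lc: "\<And>n s. s > 0 \<Longrightarrow> 2 * a (Suc n) \<le> s * a n + a (Suc (Suc n)) / s"
    and dir: "a 0 \<le> a 1 + 2 * E" and E: "E \<ge> 0"
    and eps: "\<epsilon> > 0" and am: "a m \<le> \<epsilon>^2"
  defines "\<chi>0 \<equiv> sqrt (a 0)"
  shows
    "(E / \<chi>0\<^sup>2 \<le> 1/2 \<longrightarrow>
       ereal (2 * ln (\<chi>0 / \<epsilon>)) \<le>
         (if 1 - 2 * E / \<chi>0\<^sup>2 = 0 then \<infinity>
          else ereal (- ln (1 - 2 * E / \<chi>0\<^sup>2)))
         * ereal (real m))
   \<and> (E / \<chi>0\<^sup>2 \<le> 1/4 \<longrightarrow>
       ln (\<chi>0 / \<epsilon>) \<le> 2 * (E / \<chi>0\<^sup>2) * real m)"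
proof -
  have sq: "\<chi>0^2 = a 0" unfolding \<chi>0_def using nn[of 0] by simp
  have chi_nn: "\<chi>0 \<ge> 0" unfolding \<chi>0_def using nn[of 0] by simp
  define c where "c = 1 - 2 * E / \<chi>0\<^sup>2"
  have c_alt: "c = 1 - 2 * (E / \<chi>0\<^sup>2)" unfolding c_def by simp
  have K: "2 * ln (\<chi>0 / \<epsilon>) \<le> - ln c * real m" if A0: "a 0 > 0" and cp: "c > 0"
  proof -
    have "c^m * a 0 \<le> a m"
    proof (rule real_decay[OF nn lc A0 cp])
      have "c * a 0 = a 0 - 2 * E" unfolding c_def sq using A0 by (simp add: field_simps)
      then show "c * a 0 \<le> a 1" using dir by simp
    qed
    also have "\<dots> \<le> \<epsilon>^2" by (rule am)
    finally have le: "c^m * a 0 \<le> \<epsilon>^2" .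
    have "ln (c^m * a 0) \<le> ln (\<epsilon>^2)"
      using le A0 cp eps by (subst ln_le_cancel_iff) auto
    then have "real m * ln c + ln (a 0) \<le> 2 * ln \<epsilon>"
      using A0 cp eps by (simp add: ln_mult ln_realpow)
    moreover have "ln (\<chi>0 / \<epsilon>) = ln (a 0) / 2 - ln \<epsilon>"
      unfolding \<chi>0_def using A0 eps by (simp add: ln_div ln_sqrt)
    ultimately show ?thesis by (simp add: algebra_simps)
  qed
  have K0: "ln (\<chi>0 / \<epsilon>) \<le> 0" if "m = 0"
  proof -
    have "\<chi>0^2 \<le> \<epsilon>^2" using am that sq by simp
    then have "\<chi>0 \<le> \<epsilon>" using chi_nn eps by (simp add: power2_le_iff_abs_le)
    then have "\<chi>0 / \<epsilon> \<le> 1" using eps by simp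
    then show ?thesis using chi_nn eps by (cases "\<chi>0 = 0") (auto simp: ln_le_zero_iff)
  qed
  show ?thesis
  proof (intro conjI impI)
    assume r: "E / \<chi>0\<^sup>2 \<le> 1/2"
    show "ereal (2 * ln (\<chi>0 / \<epsilon>)) \<le> (if 1 - 2 * E / \<chi>0\<^sup>2 = 0 then \<infinity> else ereal (- ln (1 - 2 * E / \<chi>0\<^sup>2))) * ereal (real m)"
    proof (cases "a 0 = 0")
      case True
      then have "\<chi>0 = 0" unfolding \<chi>0_def by simp
      then show ?thesis by simp
    next
      case False
      then have A0: "a 0 > 0" using nn[of 0] by simp
      show ?thesis
      proof (cases "c = 0")
        case True
        show ?thesis
        proof (cases "m = 0")
          case True then show ?thesis using K0 \<open>c = 0\<close> unfolding c_def by (simp add: zero_ereal_def)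
        next
          case False
          have "(if 1 - 2 * E / \<chi>0\<^sup>2 = 0 then \<infinity> else ereal (- ln (1 - 2 * E / \<chi>0\<^sup>2))) = \<infinity>"
          proof -
            have cz: "1 - 2 * E / \<chi>0\<^sup>2 = 0" using \<open>c = 0\<close> unfolding c_def .
            show ?thesis unfolding cz by simp
          qed
          moreover have "\<infinity> * ereal (real m) = \<infinity>" using False by simp
          ultimately show ?thesis by simp
        qed
      next
        case False
        have "c \<ge> 0" using r unfolding c_alt by (simp add: mult.commute)
        then have cp: "c > 0" using False by simp
        have "ereal (2 * ln (\<chi>0 / \<epsilon>)) \<le> ereal (- ln c * real m)" using K[OF A0 cp] by simp
        moreover have cz: "\<not> (1 - 2 * E / \<chi>0\<^sup>2 = 0)" using False unfolding c_def .
        ultimately show ?thesis unfolding if_not_P[OF cz] c_def by simp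
      qed
    qed
  next
    assume r: "E / \<chi>0\<^sup>2 \<le> 1/4"
    show "ln (\<chi>0 / \<epsilon>) \<le> 2 * (E / \<chi>0\<^sup>2) * real m"
    proof (cases "a 0 = 0")
      case True
      then have "\<chi>0 = 0" unfolding \<chi>0_def by simp
      then show ?thesis by simp
    next
      case False
      then have A0: "a 0 > 0" using nn[of 0] by simp
      define x where "x = 2 * (E / \<chi>0\<^sup>2)"
      have x0: "x \<ge> 0" unfolding x_def using E by simp
      have x1: "x \<le> 1/2" unfolding x_def using r by (simp add: mult.commute)
      have cx: "c = 1 - x" unfolding c_alt x_def ..
      have cp: "c > 0" using x1 cx by simp
      have "- x - 2 * x^2 \<le> ln (1 - x)" by (rule ln_one_minus_pos_lower_bound[OF x0 x1])
      moreover have "2 * x^2 \<le> x" using x0 x1 using mult_left_mono[of "2*x" 1 x] by (simp add: power2_eq_square algebra_simps)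
      ultimately have "- ln c \<le> 2 * x" unfolding cx by simp
      then have "- ln c * real m \<le> 2 * x * real m" by (intro mult_right_mono) auto
      with K[OF A0 cp] have "2 * ln (\<chi>0 / \<epsilon>) \<le> 2 * x * real m" by simp
      then show ?thesis unfolding x_def by simp
    qed
  qed
qed




context
  fixes \<pi> :: "'a measure" and K :: "'a \<Rightarrow> 'a measure"
  assumes pi_prob: "prob_space \<pi>"
    and K_kernel: "K \<in> \<pi> \<rightarrow>\<^sub>M prob_algebra \<pi>"
    and rev: "reversible \<pi> K"
begin

lemma K_sub: "K \<in> \<pi> \<rightarrow>\<^sub>M subprob_algebra \<pi>"
  using K_kernel by (rule measurable_prob_algebraD)

lemma Ksets: "y \<in> space \<pi> \<Longrightarrow> sets (K y) = sets \<pi>"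
  using subprob_measurableD(2)[OF K_sub] by blast

lemma Kspace: "y \<in> space \<pi> \<Longrightarrow> space (K y) = space \<pi>"
  using subprob_measurableD(1)[OF K_sub] by blast

lemma Kprob: "y \<in> space \<pi> \<Longrightarrow> prob_space (K y)"
  using measurable_space[OF K_kernel] by (auto simp: space_prob_algebra)

lemma Kmeas: "y \<in> space \<pi> \<Longrightarrow> g \<in> borel_measurable \<pi> \<Longrightarrow> g \<in> borel_measurable (K y)"
  using Ksets by (simp cong: measurable_cong_sets)

lemma Pmeas[measurable]: "g \<in> borel_measurable \<pi> \<Longrightarrow> (\<lambda>y. \<integral>\<^sup>+x. g x \<partial>K y) \<in> borel_measurable \<pi>"
  by (rule measurable_compose[OF K_sub nn_integral_measurable_subprob_algebra])

lemma Kemeas: "A \<in> sets \<pi> \<Longrightarrow> (\<lambda>y. emeasure (K y) A) \<in> borel_measurable \<pi>"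
  by (rule measurable_compose[OF K_sub measurable_emeasure_subprob_algebra])

lemma Pmeas2: "(\<lambda>(x, y). f x y) \<in> borel_measurable (\<pi> \<Otimes>\<^sub>M \<pi>) \<Longrightarrow> (\<lambda>x. \<integral>\<^sup>+y. f x y \<partial>K x) \<in> borel_measurable \<pi>"
  by (rule nn_integral_measurable_subprob_algebra2[OF _ K_sub])

lemma Pconst: "y \<in> space \<pi> \<Longrightarrow> (\<integral>\<^sup>+x. c \<partial>K y) = c"
  using prob_space.emeasure_space_1[OF Kprob] by (simp add: nn_integral_const)

lemma Pind: "y \<in> space \<pi> \<Longrightarrow> A \<in> sets \<pi> \<Longrightarrow> (\<integral>\<^sup>+x. indicator A x \<partial>K y) = emeasure (K y) A"
  using Ksets by simp

lemma Pcong: "y \<in> space \<pi> \<Longrightarrow> (\<And>x. x \<in> space \<pi> \<Longrightarrow> f x = g x) \<Longrightarrow> (\<integral>\<^sup>+x. f x \<partial>K y) = (\<integral>\<^sup>+x. g x \<partial>K y)"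
  using Kspace by (auto intro: nn_integral_cong)

lemma Pcmult: "y \<in> space \<pi> \<Longrightarrow> u \<in> borel_measurable \<pi> \<Longrightarrow> (\<integral>\<^sup>+x. c * u x \<partial>K y) = c * (\<integral>\<^sup>+x. u x \<partial>K y)"
  by (rule nn_integral_cmult[OF Kmeas])

lemma Padd: "y \<in> space \<pi> \<Longrightarrow> u \<in> borel_measurable \<pi> \<Longrightarrow> v \<in> borel_measurable \<pi> \<Longrightarrow> (\<integral>\<^sup>+x. v x + u x \<partial>K y) = (\<integral>\<^sup>+x. v x \<partial>K y) + (\<integral>\<^sup>+x. u x \<partial>K y)"
  by (rule nn_integral_add[OF Kmeas Kmeas])

lemma Psup: "y \<in> space \<pi> \<Longrightarrow> (\<And>i. U i \<in> borel_measurable \<pi>) \<Longrightarrow> incseq U \<Longrightarrow> (\<integral>\<^sup>+x. (SUP i. U i) x \<partial>K y) = (SUP i. \<integral>\<^sup>+x. U i x \<partial>K y)"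
  unfolding SUP_apply by (rule nn_integral_monotone_convergence_SUP[OF _ Kmeas])

lemma K1_half:
  assumes A: "A \<in> sets \<pi>" and g: "g \<in> borel_measurable \<pi>"
  shows "(\<integral>\<^sup>+x. indicator A x * (\<integral>\<^sup>+y. g y \<partial>K x) \<partial>\<pi>) = (\<integral>\<^sup>+y. g y * emeasure (K y) A \<partial>\<pi>)"
  using g
proof (induction g rule: borel_measurable_induct)
  case (cong f g)
  have "(\<integral>\<^sup>+x. indicator A x * (\<integral>\<^sup>+y. f y \<partial>K x) \<partial>\<pi>) = (\<integral>\<^sup>+x. indicator A x * (\<integral>\<^sup>+y. g y \<partial>K x) \<partial>\<pi>)"
    by (rule nn_integral_cong) (metis Pcong cong.hyps(3))
  also have "\<dots> = (\<integral>\<^sup>+y. g y * emeasure (K y) A \<partial>\<pi>)" by fact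
  also have "\<dots> = (\<integral>\<^sup>+y. f y * emeasure (K y) A \<partial>\<pi>)"
    by (rule nn_integral_cong) (metis cong.hyps(3))
  finally show ?case .
next
  case (set B)
  have "(\<integral>\<^sup>+x. indicator A x * (\<integral>\<^sup>+y. indicator B y \<partial>K x) \<partial>\<pi>) = (\<integral>\<^sup>+x. indicator A x * emeasure (K x) B \<partial>\<pi>)"
    by (intro nn_integral_cong) (simp add: Pind set)
  also have "\<dots> = (\<integral>\<^sup>+y. indicator B y * emeasure (K y) A \<partial>\<pi>)"
    using rev A set unfolding reversible_def by blast
  finally show ?case .
next
  case (mult u c)
  have "(\<integral>\<^sup>+x. indicator A x * (\<integral>\<^sup>+y. c * u y \<partial>K x) \<partial>\<pi>) = (\<integral>\<^sup>+x. c * (indicator A x * (\<integral>\<^sup>+y. u y \<partial>K x)) \<partial>\<pi>)"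
    by (intro nn_integral_cong) (simp add: Pcmult mult ac_simps)
  also have "\<dots> = c * (\<integral>\<^sup>+x. indicator A x * (\<integral>\<^sup>+y. u y \<partial>K x) \<partial>\<pi>)"
    using mult A by (intro nn_integral_cmult borel_measurable_times_ennreal borel_measurable_indicator Pmeas)
  also have "\<dots> = c * (\<integral>\<^sup>+y. u y * emeasure (K y) A \<partial>\<pi>)" using mult by simp
  also have "\<dots> = (\<integral>\<^sup>+y. c * u y * emeasure (K y) A \<partial>\<pi>)"
    using mult A by (subst nn_integral_cmult[symmetric]) (auto intro!: borel_measurable_times_ennreal Kemeas simp: ac_simps)
  finally show ?case .
next
  case (add u v)
  have "(\<integral>\<^sup>+x. indicator A x * (\<integral>\<^sup>+y. v y + u y \<partial>K x) \<partial>\<pi>) = (\<integral>\<^sup>+x. indicator A x * (\<integral>\<^sup>+y. v y \<partial>K x) + indicator A x * (\<integral>\<^sup>+y. u y \<partial>K x) \<partial>\<pi>)"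
    by (intro nn_integral_cong) (simp add: Padd add distrib_left)
  also have "\<dots> = (\<integral>\<^sup>+x. indicator A x * (\<integral>\<^sup>+y. v y \<partial>K x) \<partial>\<pi>) + (\<integral>\<^sup>+x. indicator A x * (\<integral>\<^sup>+y. u y \<partial>K x) \<partial>\<pi>)"
    using add A by (intro nn_integral_add borel_measurable_times_ennreal borel_measurable_indicator Pmeas)
  also have "\<dots> = (\<integral>\<^sup>+y. v y * emeasure (K y) A \<partial>\<pi>) + (\<integral>\<^sup>+y. u y * emeasure (K y) A \<partial>\<pi>)" using add by simp
  also have "\<dots> = (\<integral>\<^sup>+y. v y * emeasure (K y) A + u y * emeasure (K y) A \<partial>\<pi>)"
    using add A by (intro nn_integral_add[symmetric] borel_measurable_times_ennreal Kemeas)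
  finally show ?case by (simp add: distrib_right)
next
  case (seq U)
  have "(\<integral>\<^sup>+x. indicator A x * (\<integral>\<^sup>+y. (SUP i. U i) y \<partial>K x) \<partial>\<pi>) = (\<integral>\<^sup>+x. (SUP i. indicator A x * (\<integral>\<^sup>+y. U i y \<partial>K x)) \<partial>\<pi>)"
    by (rule nn_integral_cong) (subst Psup[OF _ seq(1) \<open>incseq U\<close>], simp_all add: SUP_mult_left_ennreal)
  also have "\<dots> = (SUP i. \<integral>\<^sup>+x. indicator A x * (\<integral>\<^sup>+y. U i y \<partial>K x) \<partial>\<pi>)"
  proof (rule nn_integral_monotone_convergence_SUP)
    show "incseq (\<lambda>i x. indicator A x * (\<integral>\<^sup>+y. U i y \<partial>K x))"
      using \<open>incseq U\<close> by (auto simp: incseq_def le_fun_def intro!: mult_left_mono nn_integral_mono)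
  qed (use seq A in \<open>intro borel_measurable_times_ennreal borel_measurable_indicator Pmeas\<close>)
  also have "\<dots> = (SUP i. \<integral>\<^sup>+y. U i y * emeasure (K y) A \<partial>\<pi>)" using seq by simp
  also have "\<dots> = (\<integral>\<^sup>+y. (SUP i. U i y * emeasure (K y) A) \<partial>\<pi>)"
  proof (rule nn_integral_monotone_convergence_SUP[symmetric])
    show "incseq (\<lambda>i y. U i y * emeasure (K y) A)"
      using \<open>incseq U\<close> by (auto simp: incseq_def le_fun_def intro!: mult_right_mono)
  qed (use seq A in \<open>intro borel_measurable_times_ennreal Kemeas\<close>)
  also have "\<dots> = (\<integral>\<^sup>+y. (SUP i. U i) y * emeasure (K y) A \<partial>\<pi>)"
    by (simp add: SUP_mult_right_ennreal image_comp)
  finally show ?case .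
qed

lemma K1:
  assumes f: "f \<in> borel_measurable \<pi>" and g: "g \<in> borel_measurable \<pi>"
  shows "(\<integral>\<^sup>+x. f x * (\<integral>\<^sup>+y. g y \<partial>K x) \<partial>\<pi>) = (\<integral>\<^sup>+y. g y * (\<integral>\<^sup>+x. f x \<partial>K y) \<partial>\<pi>)"
  using f
proof (induction f rule: borel_measurable_induct)
  case (cong f1 f2)
  have "(\<integral>\<^sup>+x. f1 x * (\<integral>\<^sup>+y. g y \<partial>K x) \<partial>\<pi>) = (\<integral>\<^sup>+x. f2 x * (\<integral>\<^sup>+y. g y \<partial>K x) \<partial>\<pi>)"
    by (rule nn_integral_cong) (metis cong.hyps(3))
  also have "\<dots> = (\<integral>\<^sup>+y. g y * (\<integral>\<^sup>+x. f2 x \<partial>K y) \<partial>\<pi>)" by fact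
  also have "\<dots> = (\<integral>\<^sup>+y. g y * (\<integral>\<^sup>+x. f1 x \<partial>K y) \<partial>\<pi>)"
    by (rule nn_integral_cong) (metis Pcong cong.hyps(3))
  finally show ?case .
next
  case (set A)
  have "(\<integral>\<^sup>+x. indicator A x * (\<integral>\<^sup>+y. g y \<partial>K x) \<partial>\<pi>) = (\<integral>\<^sup>+y. g y * emeasure (K y) A \<partial>\<pi>)"
    by (rule K1_half[OF set g])
  also have "\<dots> = (\<integral>\<^sup>+y. g y * (\<integral>\<^sup>+x. indicator A x \<partial>K y) \<partial>\<pi>)"
    by (rule nn_integral_cong) (simp add: Pind set)
  finally show ?case .
next
  case (mult u c)
  have "(\<integral>\<^sup>+x. c * u x * (\<integral>\<^sup>+y. g y \<partial>K x) \<partial>\<pi>) = (\<integral>\<^sup>+x. c * (u x * (\<integral>\<^sup>+y. g y \<partial>K x)) \<partial>\<pi>)"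
    by (simp add: ac_simps)
  also have "\<dots> = c * (\<integral>\<^sup>+x. u x * (\<integral>\<^sup>+y. g y \<partial>K x) \<partial>\<pi>)"
    using mult g by (intro nn_integral_cmult borel_measurable_times_ennreal Pmeas)
  also have "\<dots> = c * (\<integral>\<^sup>+y. g y * (\<integral>\<^sup>+x. u x \<partial>K y) \<partial>\<pi>)" using mult by simp
  also have "\<dots> = (\<integral>\<^sup>+y. c * (g y * (\<integral>\<^sup>+x. u x \<partial>K y)) \<partial>\<pi>)"
    using mult g by (intro nn_integral_cmult[symmetric] borel_measurable_times_ennreal Pmeas)
  also have "\<dots> = (\<integral>\<^sup>+y. g y * (\<integral>\<^sup>+x. c * u x \<partial>K y) \<partial>\<pi>)"
    by (rule nn_integral_cong) (simp add: Pcmult mult ac_simps)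
  finally show ?case .
next
  case (add u v)
  have "(\<integral>\<^sup>+x. (v x + u x) * (\<integral>\<^sup>+y. g y \<partial>K x) \<partial>\<pi>) = (\<integral>\<^sup>+x. v x * (\<integral>\<^sup>+y. g y \<partial>K x) + u x * (\<integral>\<^sup>+y. g y \<partial>K x) \<partial>\<pi>)"
    by (simp add: distrib_right)
  also have "\<dots> = (\<integral>\<^sup>+x. v x * (\<integral>\<^sup>+y. g y \<partial>K x) \<partial>\<pi>) + (\<integral>\<^sup>+x. u x * (\<integral>\<^sup>+y. g y \<partial>K x) \<partial>\<pi>)"
    using add g by (intro nn_integral_add borel_measurable_times_ennreal Pmeas)
  also have "\<dots> = (\<integral>\<^sup>+y. g y * (\<integral>\<^sup>+x. v x \<partial>K y) \<partial>\<pi>) + (\<integral>\<^sup>+y. g y * (\<integral>\<^sup>+x. u x \<partial>K y) \<partial>\<pi>)" using add by simp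
  also have "\<dots> = (\<integral>\<^sup>+y. g y * (\<integral>\<^sup>+x. v x \<partial>K y) + g y * (\<integral>\<^sup>+x. u x \<partial>K y) \<partial>\<pi>)"
    using add g by (intro nn_integral_add[symmetric] borel_measurable_times_ennreal Pmeas)
  also have "\<dots> = (\<integral>\<^sup>+y. g y * (\<integral>\<^sup>+x. v x + u x \<partial>K y) \<partial>\<pi>)"
    by (rule nn_integral_cong) (simp add: Padd add distrib_left)
  finally show ?case .
next
  case (seq U)
  have "(\<integral>\<^sup>+x. (SUP i. U i) x * (\<integral>\<^sup>+y. g y \<partial>K x) \<partial>\<pi>) = (\<integral>\<^sup>+x. (SUP i. U i x * (\<integral>\<^sup>+y. g y \<partial>K x)) \<partial>\<pi>)"
    by (simp add: SUP_mult_right_ennreal image_comp)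
  also have "\<dots> = (SUP i. \<integral>\<^sup>+x. U i x * (\<integral>\<^sup>+y. g y \<partial>K x) \<partial>\<pi>)"
  proof (rule nn_integral_monotone_convergence_SUP)
    show "incseq (\<lambda>i x. U i x * (\<integral>\<^sup>+y. g y \<partial>K x))"
      using \<open>incseq U\<close> by (auto simp: incseq_def le_fun_def intro!: mult_right_mono)
  qed (use seq g in \<open>intro borel_measurable_times_ennreal Pmeas\<close>)
  also have "\<dots> = (SUP i. \<integral>\<^sup>+y. g y * (\<integral>\<^sup>+x. U i x \<partial>K y) \<partial>\<pi>)" using seq by simp
  also have "\<dots> = (\<integral>\<^sup>+y. (SUP i. g y * (\<integral>\<^sup>+x. U i x \<partial>K y)) \<partial>\<pi>)"
  proof (rule nn_integral_monotone_convergence_SUP[symmetric])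
    show "incseq (\<lambda>i y. g y * (\<integral>\<^sup>+x. U i x \<partial>K y))"
      using \<open>incseq U\<close> by (auto simp: incseq_def le_fun_def intro!: mult_left_mono nn_integral_mono)
  qed (use seq g in \<open>intro borel_measurable_times_ennreal Pmeas\<close>)
  also have "\<dots> = (\<integral>\<^sup>+y. g y * (\<integral>\<^sup>+x. (SUP i. U i) x \<partial>K y) \<partial>\<pi>)"
    by (rule nn_integral_cong) (subst Psup[OF _ seq(1) \<open>incseq U\<close>], simp_all add: SUP_mult_left_ennreal)
  finally show ?case .
qed

lemma Pone: "y \<in> space \<pi> \<Longrightarrow> (\<integral>\<^sup>+x. 1 \<partial>K y) = 1"
  using prob_space.emeasure_space_1[OF Kprob] by (simp add: nn_integral_const)

lemma K2:
  assumes g: "g \<in> borel_measurable \<pi>" and d: "density \<pi> g \<in> space (prob_algebra \<pi>)"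
  shows "density \<pi> g \<bind> K = density \<pi> (\<lambda>y. \<integral>\<^sup>+x. g x \<partial>K y)"
proof (rule measure_eqI)
  show "sets (density \<pi> g \<bind> K) = sets (density \<pi> (\<lambda>y. \<integral>\<^sup>+x. g x \<partial>K y))"
    using sets_bind'[OF d K_kernel] by simp
next
  fix A assume "A \<in> sets (density \<pi> g \<bind> K)"
  then have A: "A \<in> sets \<pi>" using sets_bind'[OF d K_kernel] by simp
  have "emeasure (density \<pi> g \<bind> K) A = (\<integral>\<^sup>+x. emeasure (K x) A \<partial>density \<pi> g)"
    by (rule emeasure_bind_prob_algebra[OF d K_kernel A])
  also have "\<dots> = (\<integral>\<^sup>+x. g x * emeasure (K x) A \<partial>\<pi>)"
    by (rule nn_integral_density[OF g Kemeas[OF A]])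
  also have "\<dots> = (\<integral>\<^sup>+x. g x * (\<integral>\<^sup>+y. indicator A y \<partial>K x) \<partial>\<pi>)"
    by (rule nn_integral_cong) (simp add: Pind A)
  also have "\<dots> = (\<integral>\<^sup>+y. indicator A y * (\<integral>\<^sup>+x. g x \<partial>K y) \<partial>\<pi>)"
    by (rule K1[OF g]) (use A in simp)
  also have "\<dots> = emeasure (density \<pi> (\<lambda>y. \<integral>\<^sup>+x. g x \<partial>K y)) A"
    by (subst emeasure_density[OF Pmeas[OF g] A]) (simp add: ac_simps)
  finally show "emeasure (density \<pi> g \<bind> K) A = emeasure (density \<pi> (\<lambda>y. \<integral>\<^sup>+x. g x \<partial>K y)) A" .
qed

lemma pi_sf: "sigma_finite_measure \<pi>"
  using pi_prob by (rule prob_space_imp_sigma_finite)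

lemma chain:
  assumes mu0: "\<mu>0 \<in> space (prob_algebra \<pi>)" and ac: "absolutely_continuous \<pi> \<mu>0"
  shows "law_after K n \<mu>0 \<in> space (prob_algebra \<pi>) \<and> absolutely_continuous \<pi> (law_after K n \<mu>0)"
proof (induction n)
  case 0
  then show ?case using mu0 ac by (simp add: law_after_def)
next
  case (Suc n)
  let ?m = "law_after K n \<mu>0"
  have eq: "law_after K (Suc n) \<mu>0 = ?m \<bind> K"
    by (simp add: law_after_def chain_step_def)
  have sm: "sets ?m = sets \<pi>" using Suc by (simp add: space_prob_algebra)
  have d: "density \<pi> (RN_deriv \<pi> ?m) = ?m"
    using Suc sm by (intro sigma_finite_measure.density_RN_deriv[OF pi_sf]) auto
  have "?m \<bind> K = density \<pi> (\<lambda>y. \<integral>\<^sup>+x. RN_deriv \<pi> ?m x \<partial>K y)"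
    using K2[of "RN_deriv \<pi> ?m"] d Suc by simp
  moreover have "?m \<bind> K \<in> space (prob_algebra \<pi>)"
    using prob_space_bind'[OF _ K_kernel] sets_bind'[OF _ K_kernel] Suc by (simp add: space_prob_algebra)
  ultimately show ?case using eq by (simp add: absolutely_continuousI_density Pmeas)
qed

context
  fixes \<mu>0 :: "'a measure"
  assumes mu0: "\<mu>0 \<in> space (prob_algebra \<pi>)" and ac0: "absolutely_continuous \<pi> \<mu>0"
begin

abbreviation "mu n \<equiv> law_after K n \<mu>0"
abbreviation "hh n \<equiv> density_wrt \<pi> (mu n)"

lemma hh_meas[measurable]: "hh n \<in> borel_measurable \<pi>"
  unfolding density_wrt_def by measurable

lemma hh_nonneg: "hh n x \<ge> 0"
  unfolding density_wrt_def by simp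

lemma mu_prob: "mu n \<in> space (prob_algebra \<pi>)" and mu_ac: "absolutely_continuous \<pi> (mu n)"
  using chain[OF mu0 ac0] by auto

lemma mu_sets: "sets (mu n) = sets \<pi>"
  using mu_prob by (simp add: space_prob_algebra)

lemma mu_space1: "emeasure (mu n) (space \<pi>) = 1"
proof -
  have "prob_space (mu n)" using mu_prob by (simp add: space_prob_algebra)
  moreover have "space (mu n) = space \<pi>" using mu_sets by (rule sets_eq_imp_space_eq)
  ultimately show ?thesis using prob_space.emeasure_space_1 by metis
qed

lemma dens_int: "f \<in> borel_measurable \<pi> \<Longrightarrow> density \<pi> f = mu n \<Longrightarrow> (\<integral>\<^sup>+x. f x \<partial>\<pi>) = 1"
proof -
  assume f: "f \<in> borel_measurable \<pi>" and d: "density \<pi> f = mu n"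
  have "1 = emeasure (density \<pi> f) (space \<pi>)" using d mu_space1 by simp
  also have "\<dots> = (\<integral>\<^sup>+x. f x * indicator (space \<pi>) x \<partial>\<pi>)" by (rule emeasure_density[OF f]) simp
  also have "\<dots> = (\<integral>\<^sup>+x. f x \<partial>\<pi>)" by (rule nn_integral_cong) simp
  finally show ?thesis by simp
qed

lemma mu_density: "mu n = density \<pi> (\<lambda>x. ennreal (hh n x))"
proof -
  have d: "density \<pi> (RN_deriv \<pi> (mu n)) = mu n"
    using mu_ac mu_sets by (intro sigma_finite_measure.density_RN_deriv[OF pi_sf]) auto
  have "(\<integral>\<^sup>+x. RN_deriv \<pi> (mu n) x \<partial>\<pi>) = 1" by (rule dens_int[OF _ d]) simp
  then have "AE x in \<pi>. RN_deriv \<pi> (mu n) x \<noteq> \<infinity>"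
    by (intro nn_integral_noteq_infinite) auto
  then have "AE x in \<pi>. RN_deriv \<pi> (mu n) x = ennreal (hh n x)"
    by eventually_elim (simp add: density_wrt_def ennreal_enn2real_if)
  then have "density \<pi> (RN_deriv \<pi> (mu n)) = density \<pi> (\<lambda>x. ennreal (hh n x))"
    by (intro density_cong) auto
  with d show ?thesis by simp
qed

lemma hh_int: "(\<integral>\<^sup>+x. ennreal (hh n x) \<partial>\<pi>) = 1"
  by (rule dens_int[OF _ mu_density[symmetric]]) simp

lemma hh_step: "AE x in \<pi>. ennreal (hh (Suc n) x) = (\<integral>\<^sup>+y. ennreal (hh n y) \<partial>K x)"
proof -
  have "mu (Suc n) = mu n \<bind> K" by (simp add: law_after_def chain_step_def)
  also have "\<dots> = density \<pi> (\<lambda>x. ennreal (hh n x)) \<bind> K" by (subst mu_density) simp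
  also have "\<dots> = density \<pi> (\<lambda>x. \<integral>\<^sup>+y. ennreal (hh n y) \<partial>K x)"
    by (rule K2) (use mu_prob mu_density in \<open>simp_all\<close>)
  finally have "density \<pi> (\<lambda>x. ennreal (hh (Suc n) x)) = density \<pi> (\<lambda>x. \<integral>\<^sup>+y. ennreal (hh n y) \<partial>K x)"
    using mu_density by metis
  then show ?thesis
    by (subst sigma_finite_measure.density_unique_iff[OF pi_sf, symmetric]) (auto intro: Pmeas)
qed

abbreviation "ip n m \<equiv> (\<integral>\<^sup>+x. ennreal (hh n x * hh m x) \<partial>\<pi>)"

lemma hhP_meas[measurable]: "(\<lambda>x. \<integral>\<^sup>+y. ennreal (hh m y) \<partial>K x) \<in> borel_measurable \<pi>"
  by (rule Pmeas) simp

lemma ip_P: "ip n (Suc m) = (\<integral>\<^sup>+x. ennreal (hh n x) * (\<integral>\<^sup>+y. ennreal (hh m y) \<partial>K x) \<partial>\<pi>)"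
proof (rule nn_integral_cong_AE)
  show "AE x in \<pi>. ennreal (hh n x * hh (Suc m) x) = ennreal (hh n x) * (\<integral>\<^sup>+y. ennreal (hh m y) \<partial>K x)"
    using hh_step[of m] by eventually_elim (simp add: ennreal_mult hh_nonneg)
qed

lemma ip_comm: "ip n m = ip m n"
  by (simp add: mult.commute)

lemma ip_shift: "ip n (Suc m) = ip (Suc n) m"
proof -
  have "ip n (Suc m) = (\<integral>\<^sup>+x. ennreal (hh n x) * (\<integral>\<^sup>+y. ennreal (hh m y) \<partial>K x) \<partial>\<pi>)" by (rule ip_P)
  also have "\<dots> = (\<integral>\<^sup>+x. ennreal (hh m x) * (\<integral>\<^sup>+y. ennreal (hh n y) \<partial>K x) \<partial>\<pi>)"
    by (rule K1) simp_all
  also have "\<dots> = ip m (Suc n)" by (rule ip_P[symmetric])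
  finally show ?thesis by (simp add: ip_comm)
qed

lemma BB_mono: "ip (Suc n) (Suc n) \<le> ip n n"
proof -
  have "ip (Suc n) (Suc n) = (\<integral>\<^sup>+x. (\<integral>\<^sup>+y. ennreal (hh n y) \<partial>K x)^2 \<partial>\<pi>)"
  proof (rule nn_integral_cong_AE)
    show "AE x in \<pi>. ennreal (hh (Suc n) x * hh (Suc n) x) = (\<integral>\<^sup>+y. ennreal (hh n y) \<partial>K x)^2"
      using hh_step[of n] by eventually_elim (simp add: ennreal_mult hh_nonneg power2_eq_square)
  qed
  also have "\<dots> \<le> (\<integral>\<^sup>+x. (\<integral>\<^sup>+y. (ennreal (hh n y))^2 \<partial>K x) \<partial>\<pi>)"
    by (intro nn_integral_mono nn_jensen_sq Kprob Kmeas) auto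
  also have "\<dots> = (\<integral>\<^sup>+x. 1 * (\<integral>\<^sup>+y. (ennreal (hh n y))^2 \<partial>K x) \<partial>\<pi>)" by simp
  also have "\<dots> = (\<integral>\<^sup>+y. (ennreal (hh n y))^2 * (\<integral>\<^sup>+x. 1 \<partial>K y) \<partial>\<pi>)"
    by (rule K1) simp_all
  also have "\<dots> = (\<integral>\<^sup>+y. (ennreal (hh n y))^2 \<partial>\<pi>)"
    by (rule nn_integral_cong) (simp add: Pone del: nn_integral_const)
  also have "\<dots> = ip n n"
    by (rule nn_integral_cong) (simp add: ennreal_mult hh_nonneg power2_eq_square)
  finally show ?thesis .
qed

abbreviation "II n \<equiv> (\<integral>\<^sup>+x. ennreal ((hh n x - 1)^2) \<partial>\<pi>)"

lemma II_rel: "II n + 2 = ip n n + 1"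
proof -
  have "II n + 2 * 1 = II n + (\<integral>\<^sup>+x. 2 * ennreal (hh n x) \<partial>\<pi>)"
    by (simp add: nn_integral_cmult hh_int)
  also have "\<dots> = (\<integral>\<^sup>+x. ennreal ((hh n x - 1)^2) + 2 * ennreal (hh n x) \<partial>\<pi>)"
    by (rule nn_integral_add[symmetric]) simp_all
  also have "\<dots> = (\<integral>\<^sup>+x. ennreal (hh n x * hh n x) + 1 \<partial>\<pi>)"
    by (rule nn_integral_cong) (simp add: pt_sq hh_nonneg)
  also have "\<dots> = ip n n + (\<integral>\<^sup>+x. 1 \<partial>\<pi>)"
    by (rule nn_integral_add) simp_all
  also have "(\<integral>\<^sup>+x. 1 \<partial>\<pi>) = 1"
    using prob_space.emeasure_space_1[OF pi_prob] by simp
  finally show ?thesis by simp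
qed

lemma chi_val: "II n \<noteq> \<infinity> \<Longrightarrow> chi \<pi> (mu n) = ennreal (sqrt (enn2real (II n)))"
  unfolding chi_def using mu_sets mu_ac by (simp add: Let_def)

lemma II0_fin: "chi \<pi> (mu 0) < \<infinity> \<Longrightarrow> II 0 \<noteq> \<infinity>"
  unfolding chi_def using mu_sets mu_ac by (auto simp: Let_def split: if_splits)

lemma fin_all: assumes "II 0 \<noteq> \<infinity>" shows "ip n n \<noteq> \<infinity>" "II n \<noteq> \<infinity>"
proof -
  have "ip 0 0 \<noteq> \<infinity>"
  proof
    assume "ip 0 0 = \<infinity>"
    then have "II 0 + 2 = \<infinity>" using II_rel[of 0] by simp
    then show False using assms by (simp add: ennreal_add_eq_top)
  qed
  moreover have "ip n n \<le> ip 0 0"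
    by (induction n) (auto intro: order_trans[OF BB_mono])
  ultimately show 1: "ip n n \<noteq> \<infinity>" by (auto simp: top_unique)
  show "II n \<noteq> \<infinity>" using II_rel[of n] 1
    by (metis ennreal_add_eq_top ennreal_one_neq_top infinity_ennreal_def)
qed

lemma logconv_enn:
  assumes s: "s > 0"
  shows "2 * ip (Suc n) (Suc n) + 2 * 1 \<le> ennreal s * II n + ennreal (1/s) * II (Suc (Suc n)) + 2 * 1 + 2 * 1"
proof -
  have "2 * ip (Suc n) (Suc n) + 2 * 1 = 2 * ip n (Suc (Suc n)) + 2 * 1" by (simp add: ip_shift)
  also have "2 * ip n (Suc (Suc n)) = (\<integral>\<^sup>+x. ennreal (2 * (hh n x * hh (Suc (Suc n)) x)) \<partial>\<pi>)"
    by (subst nn_cmult_real) (simp_all add: hh_nonneg)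
  also have "(2::ennreal) * 1 = (\<integral>\<^sup>+x. 2 \<partial>\<pi>)"
    using prob_space.emeasure_space_1[OF pi_prob] by simp
  also have "(\<integral>\<^sup>+x. ennreal (2 * (hh n x * hh (Suc (Suc n)) x)) \<partial>\<pi>) + (\<integral>\<^sup>+x. 2 \<partial>\<pi>) =
      (\<integral>\<^sup>+x. ennreal (2 * (hh n x * hh (Suc (Suc n)) x)) + 2 \<partial>\<pi>)"
    by (rule nn_integral_add[symmetric]) simp_all
  also have "\<dots> \<le> (\<integral>\<^sup>+x. ennreal (s * (hh n x - 1)^2) + ennreal (1/s * (hh (Suc (Suc n)) x - 1)^2) + 2 * ennreal (hh n x) + 2 * ennreal (hh (Suc (Suc n)) x) \<partial>\<pi>)"
    by (intro nn_integral_mono pt_logconv hh_nonneg s)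
  also have "\<dots> = (\<integral>\<^sup>+x. ennreal (s * (hh n x - 1)^2) \<partial>\<pi>) + (\<integral>\<^sup>+x. ennreal (1/s * (hh (Suc (Suc n)) x - 1)^2) \<partial>\<pi>) + (\<integral>\<^sup>+x. 2 * ennreal (hh n x) \<partial>\<pi>) + (\<integral>\<^sup>+x. 2 * ennreal (hh (Suc (Suc n)) x) \<partial>\<pi>)"
    by (rule nn_add4) simp_all
  also have "\<dots> = ennreal s * II n + ennreal (1/s) * II (Suc (Suc n)) + 2 * 1 + 2 * 1"
  proof -
    have e1: "(\<integral>\<^sup>+x. ennreal (s * (hh n x - 1)^2) \<partial>\<pi>) = ennreal s * II n"
      by (rule nn_cmult_real) (use s in simp_all)
    have e2: "(\<integral>\<^sup>+x. ennreal (1/s * (hh (Suc (Suc n)) x - 1)^2) \<partial>\<pi>) = ennreal (1/s) * II (Suc (Suc n))"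
      by (rule nn_cmult_real) (use s in simp_all)
    have e3: "(\<integral>\<^sup>+x. 2 * ennreal (hh m x) \<partial>\<pi>) = 2 * 1" for m
      by (simp add: nn_integral_cmult hh_int)
    show ?thesis unfolding e1 e2 e3 ..
  qed
  finally have X: "2 * ip (Suc n) (Suc n) + (\<integral>\<^sup>+x. 2 \<partial>\<pi>) \<le> ennreal s * II n + ennreal (1/s) * II (Suc (Suc n)) + 2 * 1 + 2 * 1" .
  have e: "(\<integral>\<^sup>+x. 2 \<partial>\<pi>) = (2::ennreal) * 1"
    using prob_space.emeasure_space_1[OF pi_prob] by simp
  show ?thesis using X unfolding e .
qed

abbreviation "DD \<equiv> (\<integral>\<^sup>+x. (\<integral>\<^sup>+y. ennreal ((hh 0 x - hh 0 y)^2) \<partial>K x) \<partial>\<pi>)"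

lemma dir_eq: "DD + 2 * ip 0 1 = 2 * ip 0 0"
proof -
  let ?a = "hh 0"
  have m1: "(\<lambda>x. \<integral>\<^sup>+y. ennreal ((?a x - ?a y)^2) \<partial>K x) \<in> borel_measurable \<pi>"
    by (rule Pmeas2) measurable
  have m2: "(\<lambda>x. \<integral>\<^sup>+y. ennreal (2 * ?a x * ?a y) \<partial>K x) \<in> borel_measurable \<pi>"
    by (rule Pmeas2) measurable
  have m3: "(\<lambda>x. \<integral>\<^sup>+y. ennreal (?a y ^2) \<partial>K x) \<in> borel_measurable \<pi>"
    by (rule Pmeas) measurable
  define S where "S = (\<integral>\<^sup>+x. (\<integral>\<^sup>+y. ennreal ((?a x - ?a y)^2) + ennreal (2 * ?a x * ?a y) \<partial>K x) \<partial>\<pi>)"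
  have "S = (\<integral>\<^sup>+x. (\<integral>\<^sup>+y. ennreal ((?a x - ?a y)^2) \<partial>K x) + (\<integral>\<^sup>+y. ennreal (2 * ?a x * ?a y) \<partial>K x) \<partial>\<pi>)"
    unfolding S_def by (intro nn_integral_cong nn_integral_add Kmeas) (simp_all, measurable)
  also have "\<dots> = DD + (\<integral>\<^sup>+x. (\<integral>\<^sup>+y. ennreal (2 * ?a x * ?a y) \<partial>K x) \<partial>\<pi>)"
    by (rule nn_integral_add[OF m1 m2])
  also have "(\<integral>\<^sup>+x. (\<integral>\<^sup>+y. ennreal (2 * ?a x * ?a y) \<partial>K x) \<partial>\<pi>) = (\<integral>\<^sup>+x. 2 * (ennreal (?a x) * (\<integral>\<^sup>+y. ennreal (?a y) \<partial>K x)) \<partial>\<pi>)"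
  proof (rule nn_integral_cong)
    fix x assume x: "x \<in> space \<pi>"
    have "(\<integral>\<^sup>+y. ennreal ((2 * ?a x) * ?a y) \<partial>K x) = ennreal (2 * ?a x) * (\<integral>\<^sup>+y. ennreal (?a y) \<partial>K x)"
      by (rule nn_cmult_real) (use x in \<open>simp_all add: Kmeas hh_nonneg\<close>)
    then show "(\<integral>\<^sup>+y. ennreal (2 * ?a x * ?a y) \<partial>K x) = 2 * (ennreal (?a x) * (\<integral>\<^sup>+y. ennreal (?a y) \<partial>K x))"
      by (simp add: ennreal_mult hh_nonneg ac_simps)
  qed
  also have "\<dots> = 2 * ip 0 1"
    by (subst nn_integral_cmult) (simp_all add: ip_P)
  finally have S1: "S = DD + 2 * ip 0 1" .
  have "S = (\<integral>\<^sup>+x. (\<integral>\<^sup>+y. ennreal (?a x ^2) + ennreal (?a y ^2) \<partial>K x) \<partial>\<pi>)"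
    unfolding S_def by (intro nn_integral_cong) (simp add: pt_dir hh_nonneg)
  also have "\<dots> = (\<integral>\<^sup>+x. ennreal (?a x ^2) + (\<integral>\<^sup>+y. ennreal (?a y ^2) \<partial>K x) \<partial>\<pi>)"
  proof (rule nn_integral_cong)
    fix x assume x: "x \<in> space \<pi>"
    have "(\<integral>\<^sup>+y. ennreal (?a x ^2) + ennreal (?a y ^2) \<partial>K x) = (\<integral>\<^sup>+y. ennreal (?a x ^2) \<partial>K x) + (\<integral>\<^sup>+y. ennreal (?a y ^2) \<partial>K x)"
      by (rule nn_integral_add) (use x in \<open>simp_all add: Kmeas\<close>)
    then show "(\<integral>\<^sup>+y. ennreal (?a x ^2) + ennreal (?a y ^2) \<partial>K x) = ennreal (?a x ^2) + (\<integral>\<^sup>+y. ennreal (?a y ^2) \<partial>K x)"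
      using x by (simp add: Pconst del: nn_integral_const)
  qed
  also have "\<dots> = (\<integral>\<^sup>+x. ennreal (?a x ^2) \<partial>\<pi>) + (\<integral>\<^sup>+x. (\<integral>\<^sup>+y. ennreal (?a y ^2) \<partial>K x) \<partial>\<pi>)"
    by (rule nn_integral_add[OF _ m3]) simp
  also have "(\<integral>\<^sup>+x. (\<integral>\<^sup>+y. ennreal (?a y ^2) \<partial>K x) \<partial>\<pi>) = (\<integral>\<^sup>+x. 1 * (\<integral>\<^sup>+y. ennreal (?a y ^2) \<partial>K x) \<partial>\<pi>)"
    by simp
  also have "\<dots> = (\<integral>\<^sup>+y. ennreal (?a y ^2) * (\<integral>\<^sup>+x. 1 \<partial>K y) \<partial>\<pi>)"
    by (rule K1) simp_all
  also have "\<dots> = (\<integral>\<^sup>+y. ennreal (?a y ^2) \<partial>\<pi>)"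
    by (rule nn_integral_cong) (simp add: Pone del: nn_integral_const)
  also have "(\<integral>\<^sup>+y. ennreal (?a y ^2) \<partial>\<pi>) = ip 0 0"
    by (simp add: power2_eq_square)
  finally have S2: "S = ip 0 0 + ip 0 0" .
  show ?thesis using S1 S2 by (simp add: mult_2)
qed

lemma ip01_le: "2 * ip 0 1 \<le> ip 0 0 + ip 1 1"
proof -
  have "2 * ip 0 1 = (\<integral>\<^sup>+x. ennreal (2 * (hh 0 x * hh 1 x)) \<partial>\<pi>)"
    by (subst nn_cmult_real) (simp_all add: hh_nonneg)
  also have "\<dots> \<le> (\<integral>\<^sup>+x. ennreal (hh 0 x * hh 0 x) + ennreal (hh 1 x * hh 1 x) \<partial>\<pi>)"
  proof (rule nn_integral_mono)
    fix x
    have "2 * (hh 0 x * hh 1 x) \<le> hh 0 x * hh 0 x + hh 1 x * hh 1 x"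
      using sum_squares_bound[of "hh 0 x" "hh 1 x"] by (simp add: power2_eq_square mult.assoc)
    then have "ennreal (2 * (hh 0 x * hh 1 x)) \<le> ennreal (hh 0 x * hh 0 x + hh 1 x * hh 1 x)"
      by (rule ennreal_leI)
    then show "ennreal (2 * (hh 0 x * hh 1 x)) \<le> ennreal (hh 0 x * hh 0 x) + ennreal (hh 1 x * hh 1 x)"
      by (simp add: ennreal_plus hh_nonneg)
  qed
  also have "\<dots> = ip 0 0 + ip 1 1"
    by (rule nn_integral_add) simp_all
  finally show ?thesis .
qed

lemma ab_rel: assumes f: "II 0 \<noteq> \<infinity>"
  shows "II n = ennreal (enn2real (II n))" "ip n n = ennreal (enn2real (ip n n))"
    "enn2real (ip n n) = enn2real (II n) + 1"
proof -
  show A: "II n = ennreal (enn2real (II n))" using fin_all(2)[OF f, of n] by (simp add: less_top)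
  show B: "ip n n = ennreal (enn2real (ip n n))" using fin_all(1)[OF f, of n] by (simp add: less_top)
  have "enn2real (II n + 2) = enn2real (ip n n + 1)" using II_rel[of n] by simp
  moreover have "enn2real (II n + 2) = enn2real (II n) + 2"
    using fin_all[OF f] by (subst enn2real_plus) (auto simp: less_top)
  moreover have "enn2real (ip n n + 1) = enn2real (ip n n) + 1"
    using fin_all[OF f] by (subst enn2real_plus) (auto simp: less_top)
  ultimately show "enn2real (ip n n) = enn2real (II n) + 1" by simp
qed

lemma ip_real: assumes f: "II 0 \<noteq> \<infinity>" shows "ip n n = ennreal (enn2real (II n) + 1)"
proof -
  have "ip n n = ennreal (enn2real (ip n n))" by (rule ab_rel(2)[OF f])
  also have "enn2real (ip n n) = enn2real (II n) + 1" by (rule ab_rel(3)[OF f])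
  finally show ?thesis .
qed

lemma logconv_real: assumes f: "II 0 \<noteq> \<infinity>" and s: "s > 0"
  shows "2 * enn2real (II (Suc n)) \<le> s * enn2real (II n) + enn2real (II (Suc (Suc n))) / s"
proof (rule real_from_enn[OF _ _ _ s])
  have H: "2 * ip (Suc n) (Suc n) + 2 * 1 \<le> ennreal s * II n + ennreal (1/s) * II (Suc (Suc n)) + 2 * 1 + 2 * 1"
    by (rule logconv_enn[OF s])
  have e1: "II n = ennreal (enn2real (II n))" by (rule ab_rel(1)[OF f])
  have e2: "II (Suc (Suc n)) = ennreal (enn2real (II (Suc (Suc n))))" by (rule ab_rel(1)[OF f])
  have e3: "ip (Suc n) (Suc n) = ennreal (enn2real (II (Suc n)) + 1)" by (rule ip_real[OF f])
  show "2 * ennreal (enn2real (II (Suc n)) + 1) + 2 * 1 \<le> ennreal s * ennreal (enn2real (II n)) + ennreal (1/s) * ennreal (enn2real (II (Suc (Suc n)))) + 2 * 1 + 2 * 1"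
    using H by (subst (asm) e1, subst (asm) e2, subst (asm) e3) 
qed auto

lemma dir_real: assumes f: "II 0 \<noteq> \<infinity>"
  shows "enn2real (II 0) \<le> enn2real (II 1) + 2 * dirichlet_form \<pi> K (hh 0)"
proof -
  have i0: "ip 0 0 = ennreal (enn2real (II 0) + 1)" by (rule ip_real[OF f])
  have i1: "ip 1 1 = ennreal (enn2real (II 1) + 1)" by (rule ip_real[OF f])
  have ip0: "ip 0 0 \<noteq> \<infinity>" unfolding i0 by simp
  have "DD \<le> DD + 2 * ip 0 1" by simp
  also have "\<dots> = 2 * ip 0 0" by (rule dir_eq)
  finally have DDl: "DD \<le> 2 * ip 0 0" .
  have "2 * ip 0 0 \<noteq> \<infinity>" using ip0 by (simp add: ennreal_mult_eq_top_iff)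
  then have "DD \<noteq> \<infinity>" using DDl by (auto simp: top_unique)
  then have DDe: "DD = ennreal (enn2real DD)" by (simp add: less_top)
  have "ip 0 0 + ip 0 0 \<le> ip 0 0 + (DD + ip 1 1)"
  proof -
    have "ip 0 0 + ip 0 0 = DD + 2 * ip 0 1" using dir_eq by (simp add: mult_2)
    also have "\<dots> \<le> DD + (ip 0 0 + ip 1 1)" by (intro add_left_mono ip01_le)
    finally show ?thesis by (simp add: ac_simps)
  qed
  then have le: "ip 0 0 \<le> DD + ip 1 1" using ip0 ennreal_add_left_cancel_le by auto
  then have "ennreal (enn2real (II 0) + 1) \<le> ennreal (enn2real DD) + ennreal (enn2real (II 1) + 1)"
    unfolding i0 i1 by (subst (asm) DDe)
  then have "ennreal (enn2real (II 0) + 1) \<le> ennreal (enn2real DD + (enn2real (II 1) + 1))"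
    by (simp add: ennreal_plus del: ennreal_plus[symmetric])
  then have "enn2real (II 0) + 1 \<le> enn2real DD + (enn2real (II 1) + 1)"
    by (subst (asm) ennreal_le_iff) auto
  moreover have "dirichlet_form \<pi> K (hh 0) = enn2real DD / 2"
  proof -
    have e: "(1/2::ennreal) = ennreal (1/2)" using ennreal_divide_numeral[of 1 "num.Bit0 num.One"] by simp
    have h: "enn2real (1/2::ennreal) = 1/2" unfolding e by (rule enn2real_ennreal) simp
    show ?thesis unfolding dirichlet_form_def enn2real_mult h by simp
  qed
  ultimately show ?thesis by simp
qed

lemma final_ctx:
  fixes \<epsilon> :: real
  assumes eps: "\<epsilon> > 0" and chi_fin: "chi \<pi> \<mu>0 < \<infinity>"
  defines "\<chi>0 \<equiv> enn2real (chi \<pi> \<mu>0)"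
    and "h0 \<equiv> density_wrt \<pi> \<mu>0"
    and "\<tau> \<equiv> mixing_time_chi \<pi> K \<epsilon> \<mu>0"
  shows
    "(dirichlet_form \<pi> K h0 / \<chi>0\<^sup>2 \<le> 1/2 \<longrightarrow>
       \<tau> = \<infinity> \<or>
       ereal (2 * ln (\<chi>0 / \<epsilon>)) \<le>
         (if 1 - 2 * dirichlet_form \<pi> K h0 / \<chi>0\<^sup>2 = 0 then \<infinity>
          else ereal (- ln (1 - 2 * dirichlet_form \<pi> K h0 / \<chi>0\<^sup>2)))
         * ereal (real (the_enat \<tau>)))
   \<and> (dirichlet_form \<pi> K h0 / \<chi>0\<^sup>2 \<le> 1/4 \<longrightarrow>
       \<tau> = \<infinity> \<or>
       ln (\<chi>0 / \<epsilon>) \<le> 2 * (dirichlet_form \<pi> K h0 / \<chi>0\<^sup>2) * real (the_enat \<tau>))"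
proof -
  have mu0eq: "law_after K 0 \<mu>0 = \<mu>0" by (simp add: law_after_def)
  have f: "II 0 \<noteq> \<infinity>" using II0_fin chi_fin mu0eq by simp
  define a where "a n = enn2real (II n)" for n
  have nn: "\<And>n. a n \<ge> 0" unfolding a_def by simp
  have lc: "\<And>n s. s > 0 \<Longrightarrow> 2 * a (Suc n) \<le> s * a n + a (Suc (Suc n)) / s"
    unfolding a_def by (rule logconv_real[OF f])
  have dir: "a 0 \<le> a 1 + 2 * dirichlet_form \<pi> K h0"
    unfolding a_def h0_def using dir_real[OF f] mu0eq by simp
  have E: "dirichlet_form \<pi> K h0 \<ge> 0" unfolding dirichlet_form_def by simp
  have chin: "chi \<pi> (law_after K n \<mu>0) = ennreal (sqrt (a n))" for n
    unfolding a_def by (rule chi_val[OF fin_all(2)[OF f]])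
  have chi0: "\<chi>0 = sqrt (a 0)" unfolding \<chi>0_def using chin[of 0] mu0eq nn[of 0] by simp
  show ?thesis
  proof (cases "\<exists>n. chi \<pi> (law_after K n \<mu>0) \<le> ennreal \<epsilon>")
    case False
    then have "\<tau> = \<infinity>" unfolding \<tau>_def mixing_time_chi_def by (simp add: top_enat_def)
    then show ?thesis by simp
  next
    case True
    define m where "m = (LEAST n. chi \<pi> (law_after K n \<mu>0) \<le> ennreal \<epsilon>)"
    have tm: "\<tau> = enat m" unfolding \<tau>_def mixing_time_chi_def m_def by (rule Inf_enat_Least[OF True])
    have "chi \<pi> (law_after K m \<mu>0) \<le> ennreal \<epsilon>" unfolding m_def by (rule LeastI_ex[OF True])
    then have "sqrt (a m) \<le> \<epsilon>" using chin[of m] eps by (simp add: ennreal_le_iff)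
    then have am: "a m \<le> \<epsilon>^2" using nn[of m] by (metis real_sqrt_le_iff real_sqrt_pow2 power2_le_iff_abs_le real_sqrt_ge_zero abs_of_nonneg order_trans power_mono)
    have "(let x = sqrt (a 0) in
       (dirichlet_form \<pi> K h0 / x\<^sup>2 \<le> 1/2 \<longrightarrow>
       ereal (2 * ln (x / \<epsilon>)) \<le>
         (if 1 - 2 * dirichlet_form \<pi> K h0 / x\<^sup>2 = 0 then \<infinity>
          else ereal (- ln (1 - 2 * dirichlet_form \<pi> K h0 / x\<^sup>2)))
         * ereal (real m))
      \<and> (dirichlet_form \<pi> K h0 / x\<^sup>2 \<le> 1/4 \<longrightarrow>
       ln (x / \<epsilon>) \<le> 2 * (dirichlet_form \<pi> K h0 / x\<^sup>2) * real m))"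
      unfolding Let_def by (rule final_real[OF nn lc dir E eps am])
    then show ?thesis unfolding tm chi0[symmetric] Let_def by simp
  qed
qed

end

end

theorem corollary1:
  fixes \<pi> :: "'a measure" and K :: "'a \<Rightarrow> 'a measure" and \<mu>0 :: "'a measure" and \<epsilon> :: real
  assumes pi_prob: "prob_space \<pi>"
    and K_kernel: "K \<in> \<pi> \<rightarrow>\<^sub>M prob_algebra \<pi>"
    and rev: "reversible \<pi> K"
    and eps: "\<epsilon> > 0"
    and mu0: "\<mu>0 \<in> space (prob_algebra \<pi>)"
    and ac: "absolutely_continuous \<pi> \<mu>0"
    and chi_fin: "chi \<pi> \<mu>0 < \<infinity>"
  defines "\<chi>0 \<equiv> enn2real (chi \<pi> \<mu>0)"
    and "h0 \<equiv> density_wrt \<pi> \<mu>0"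
    and "\<tau> \<equiv> mixing_time_chi \<pi> K \<epsilon> \<mu>0"
  shows
    "(dirichlet_form \<pi> K h0 / \<chi>0\<^sup>2 \<le> 1/2 \<longrightarrow>
       \<tau> = \<infinity> \<or>
       ereal (2 * ln (\<chi>0 / \<epsilon>)) \<le>
         (if 1 - 2 * dirichlet_form \<pi> K h0 / \<chi>0\<^sup>2 = 0 then \<infinity>
          else ereal (- ln (1 - 2 * dirichlet_form \<pi> K h0 / \<chi>0\<^sup>2)))
         * ereal (real (the_enat \<tau>)))
   \<and> (dirichlet_form \<pi> K h0 / \<chi>0\<^sup>2 \<le> 1/4 \<longrightarrow>
       \<tau> = \<infinity> \<or>
       ln (\<chi>0 / \<epsilon>) \<le> 2 * (dirichlet_form \<pi> K h0 / \<chi>0\<^sup>2) * real (the_enat \<tau>))"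
  unfolding \<chi>0_def h0_def \<tau>_def
  by (rule final_ctx[OF pi_prob K_kernel rev mu0 ac eps chi_fin])

end
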